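(* There is an absolute constant $c>0$ such that for all integers $n\ge2$, every prime power $q$, every real $\sigma\ge1$, and every $\sigma$-secure $n$-party one-round aggregation protocol over $\mathbb{F}_q$ in the anonymized model in which each party sends $m$ messages, we have $m\ge c\,\frac{\log q}{\log n}$.
   Context: An $n$-party one-round aggregation protocol over $\mathbb{F}_q$ with $m$ messages per party consists of a randomized encoder $\mathsf{Enc}:\mathbb{F}_q\to[\ell]^m$ (for some positive integer $\ell$; each party applies it to its input with independent randomness) and an analyzer $\mathcal{A}:[\ell]^{nm}\to\mathbb{F}_q$ such that for every $\mathbf{x}\in\mathbb{F}_q^n$, every possible realization of the encodings $\mathsf{Enc}(x_1),\dots,\mathsf{Enc}(x_n)$, and every permutation $\pi$ of $[nm]$, the analyzer applied to the concatenation $(\mathsf{Enc}(x_1),\dots,\mathsf{Enc}(x_n))$ with coordinates permuted by $\pi$ outputs $\sum_i x_i$. For $\mathbf{x}\in\mathbb{F}_q^n$, $\mathcal{S}^{\mathsf{Enc}}_{\mathbf{x}}$ is the distribution on $[\ell]^{nm}$ of this concatenation after applying an independent uniformly random permutation of the $nm$ coordinates. The protocol is $\sigma$-secure if $\mathrm{SD}(\mathcal{S}^{\mathsf{Enc}}_{\mathbf{x}},\mathcal{S}^{\mathsf{Enc}}_{\mathbf{x}'})\le2^{-\sigma}$ for all $\mathbf{x},\mathbf{x}'\in\mathbb{F}_q^n$ with $\sum_ix_i=\sum_ix'_i$, where $\mathrm{SD}$ is statistical distance. *)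

theory Defs
  imports "HOL-Probability.Probability" "HOL-Algebra.Ring" "HOL-Combinatorics.Permutations"
begin

fun enc_all :: "('x \<Rightarrow> 'm list pmf) \<Rightarrow> 'x list \<Rightarrow> 'm list list pmf" where
  "enc_all Enc [] = return_pmf []"
| "enc_all Enc (x # xs) = bind_pmf (Enc x) (\<lambda>y. bind_pmf (enc_all Enc xs) (\<lambda>ys. return_pmf (y # ys)))"

definition shuffled_view :: "('x \<Rightarrow> 'm list pmf) \<Rightarrow> nat \<Rightarrow> 'x list \<Rightarrow> 'm list pmf" where
  "shuffled_view Enc N xs =
     bind_pmf (enc_all Enc xs) (\<lambda>ys.
       bind_pmf (pmf_of_set {\<pi>. \<pi> permutes {..<N}}) (\<lambda>\<pi>.
         return_pmf (permute_list \<pi> (concat ys))))"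

definition stat_dist :: "'a pmf \<Rightarrow> 'a pmf \<Rightarrow> real" where
  "stat_dist p p' = (SUP A. \<bar>measure_pmf.prob p A - measure_pmf.prob p' A\<bar>)"

definition is_agg_protocol ::
  "(nat, 'b) ring_scheme \<Rightarrow> nat \<Rightarrow> nat \<Rightarrow> nat \<Rightarrow> (nat \<Rightarrow> nat list pmf) \<Rightarrow> (nat list \<Rightarrow> nat) \<Rightarrow> bool" where
  "is_agg_protocol R n m l Enc A \<longleftrightarrow>
     l > 0 \<and>
     (\<forall>x \<in> carrier R. \<forall>y \<in> set_pmf (Enc x). length y = m \<and> set y \<subseteq> {..<l}) \<and>
     (\<forall>xs ys \<pi>. length xs = n \<longrightarrow> set xs \<subseteq> carrier R \<longrightarrow>
        list_all2 (\<lambda>x y. y \<in> set_pmf (Enc x)) xs ys \<longrightarrow>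
        \<pi> permutes {..<n * m} \<longrightarrow>
        A (permute_list \<pi> (concat ys)) = finsum R (\<lambda>i. xs ! i) {..<n})"

definition is_secure ::
  "(nat, 'b) ring_scheme \<Rightarrow> nat \<Rightarrow> nat \<Rightarrow> (nat \<Rightarrow> nat list pmf) \<Rightarrow> real \<Rightarrow> bool" where
  "is_secure R n m Enc \<sigma> \<longleftrightarrow>
     (\<forall>xs xs'. length xs = n \<longrightarrow> length xs' = n \<longrightarrow>
        set xs \<subseteq> carrier R \<longrightarrow> set xs' \<subseteq> carrier R \<longrightarrow>
        finsum R (\<lambda>i. xs ! i) {..<n} = finsum R (\<lambda>i. xs' ! i) {..<n} \<longrightarrow>
        stat_dist (shuffled_view Enc (n * m) xs) (shuffled_view Enc (n * m) xs') \<le> 2 powr (- \<sigma>))"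

end

theory Submission
  imports Defs
begin

lemma set_pmf_enc_all: "set_pmf (enc_all Enc xs) = {ys. list_all2 (\<lambda>x y. y \<in> set_pmf (Enc x)) xs ys}"
  by (induction xs) (auto simp: list_all2_Cons1)

lemma set_pmf_shuffled: "set_pmf (shuffled_view Enc N xs) =
   {permute_list \<pi> (concat ys) | ys \<pi>. list_all2 (\<lambda>x y. y \<in> set_pmf (Enc x)) xs ys \<and> \<pi> permutes {..<N}}"
proof -
  have ne: "{\<pi>. \<pi> permutes {..<N}} \<noteq> {}" using permutes_id by blast
  have "set_pmf (pmf_of_set {\<pi>. \<pi> permutes {..<N}}) = {\<pi>. \<pi> permutes {..<N}}"
    using ne by (simp add: finite_permutations)
  then show ?thesis unfolding shuffled_view_def by (auto simp: set_pmf_enc_all)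
qed

lemma concat_len: "list_all2 (\<lambda>x y. y \<in> set_pmf (Enc x)) xs ys \<Longrightarrow>
   (\<forall>x\<in>set xs. \<forall>y\<in>set_pmf (Enc x). length y = m) \<Longrightarrow> length (concat ys) = length xs * m"
  by (induction rule: list_all2_induct) auto

lemma pow_le_exp_fact: "real m ^ m \<le> exp (real m) * fact m"
proof (induction m)
  case 0 then show ?case by simp
next
  case (Suc m)
  show ?case
  proof (cases "m = 0")
    case True then show ?thesis by simp
  next
    case False
    have "(1 + 1 / real m) ^ m \<le> exp 1"
      by (rule exp_ge_one_plus_x_over_n_power_n) (use False in auto)
    hence h: "(real m + 1) ^ m \<le> exp 1 * real m ^ m"
      using False by (simp add: field_simps power_divide)
    have "real (Suc m) ^ Suc m = (real m + 1) * (real m + 1) ^ m" by (simp add: add.commute)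
    also have "\<dots> \<le> (real m + 1) * (exp 1 * real m ^ m)"
      using h by (intro mult_left_mono) auto
    also have "\<dots> \<le> (real m + 1) * (exp 1 * (exp (real m) * fact m))"
      using Suc.IH by (intro mult_left_mono) auto
    also have "\<dots> = exp (real (Suc m)) * fact (Suc m)"
      by (simp add: exp_add field_simps)
    finally show ?thesis .
  qed
qed

lemma binom_bound: assumes "m \<ge> 1" shows "real (N choose m) \<le> (exp 1 * real N / real m) ^ m"
proof -
  have a: "real (N choose m) * fact m \<le> real N ^ m"
    using binomial_fact_pow[of N m] by (metis of_nat_fact of_nat_le_iff of_nat_mult of_nat_power)
  have b: "real m ^ m \<le> exp (real m) * fact m" by (rule pow_le_exp_fact)
  have fp: "(fact m :: real) > 0" by simp
  have mp: "real m ^ m > 0" using assms by simp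
  have "real (N choose m) \<le> real N ^ m / fact m" using a fp by (simp add: field_simps)
  also have "\<dots> \<le> real N ^ m / (real m ^ m / exp (real m))"
  proof (rule divide_left_mono)
    show "real m ^ m / exp (real m) \<le> fact m" using b by (simp add: divide_le_eq mult.commute)
  qed (use mp in auto)
  also have "\<dots> = real N ^ m * exp (real m) / real m ^ m" by simp
  also have "\<dots> = (exp 1 * real N / real m) ^ m"
    by (simp add: power_divide power_mult_distrib exp_of_nat_mult[symmetric] field_simps)
  finally show ?thesis .
qed

lemma numeric: fixes n m q :: nat
  assumes n: "n \<ge> 2" and m: "m \<ge> 1" and q: "q \<ge> 1" and hq: "real q \<le> 2 * real (n*m choose m)"
  shows "1/4 * ln (real q) / ln (real n) \<le> real m"
proof -
  have "real (n*m choose m) \<le> (exp 1 * real n) ^ m"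
    using binom_bound[OF m, of "n*m"] m by simp
  hence "real q \<le> 2 * (exp 1 * real n) ^ m" using hq by linarith
  hence "ln (real q) \<le> ln (2 * (exp 1 * real n) ^ m)" using q by (subst ln_le_cancel_iff) auto
  also have "\<dots> = ln 2 + m * (1 + ln (real n))" using n by (simp add: ln_mult ln_realpow)
  finally have l1: "ln (real q) \<le> ln 2 + m * (1 + ln (real n))" .
  have ln2: "ln 2 \<le> ln (real n)" using n by simp
  have e: "exp (1/2::real) < 2"
  proof -
    have "exp (1/2::real) ^ 2 = exp 1" by (simp add: exp_of_nat_mult[symmetric] power2_eq_square exp_add[symmetric])
    hence "exp (1/2::real) ^ 2 < 2^2" using exp_le by simp
    thus ?thesis by (smt (verit) power_mono exp_gt_zero)
  qed
  have "ln (2::real) > 1/2" using e by (metis exp_gt_zero ln_exp ln_less_cancel_iff zero_less_numeral)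
  hence "1 \<le> 2 * ln (real n)" using ln2 by linarith
  hence a: "real m * (1 + ln (real n)) \<le> real m * (3 * ln (real n))"
    by (intro mult_left_mono) auto
  have Lp: "ln (real n) > 0" using n by simp
  have b: "1 * ln (real n) \<le> real m * ln (real n)"
    using m Lp by (intro mult_right_mono) auto
  have a2: "real m + real m * ln (real n) \<le> 3 * (real m * ln (real n))" using a by (simp add: algebra_simps)
  have l2: "ln (real q) \<le> ln 2 + (real m + real m * ln (real n))" using l1 by (simp add: algebra_simps)
  have "ln (real q) \<le> 4 * (real m * ln (real n))" using a2 l2 b ln2 by linarith
  moreover note Lp
  ultimately show ?thesis by (simp add: field_simps)
qed

locale proto = field R for R :: "(nat, 'b) ring_scheme" (structure) +
  fixes n m l :: nat and Enc :: "nat \<Rightarrow> nat list pmf" and A :: "nat list \<Rightarrow> nat"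
  assumes n2: "n \<ge> 2" and agg: "is_agg_protocol R n m l Enc A"
begin

definition inp :: "nat \<Rightarrow> nat \<Rightarrow> nat list" where
  "inp a b = a # b # replicate (n - 2) \<zero>"

lemma len_inp[simp]: "length (inp a b) = n" using n2 by (simp add: inp_def)

lemma set_inp: "a \<in> carrier R \<Longrightarrow> b \<in> carrier R \<Longrightarrow> set (inp a b) \<subseteq> carrier R"
  by (auto simp: inp_def)

lemma sum_g: "a \<in> carrier R \<Longrightarrow> b \<in> carrier R \<Longrightarrow>
  finsum R (\<lambda>i. if i = 0 then a else if i = 1 then b else \<zero>) {..<Suc (Suc k)} = a \<oplus> b"
proof (induction k)
  case 0
  have "{..<Suc (Suc 0)} = insert 1 (insert 0 {})" by auto
  then show ?case using 0 by (simp add: finsum_insert a_comm)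
next
  case (Suc k)
  have "{..<Suc (Suc (Suc k))} = insert (Suc (Suc k)) {..<Suc (Suc k)}" by auto
  then show ?case using Suc by (simp add: finsum_insert)
qed

lemma sum_inp: assumes "a \<in> carrier R" "b \<in> carrier R"
  shows "finsum R (\<lambda>i. inp a b ! i) {..<n} = a \<oplus> b"
proof -
  obtain k where k: "n = Suc (Suc k)" using n2 by (metis add_2_eq_Suc le_Suc_ex)
  have "finsum R (\<lambda>i. inp a b ! i) {..<n} = finsum R (\<lambda>i. if i = 0 then a else if i = 1 then b else \<zero>) {..<n}"
    using assms unfolding inp_def by (intro finsum_cong') (auto simp: k nth_Cons split: nat.splits)
  also have "\<dots> = a \<oplus> b" using sum_g[OF assms, of k] k by simp
  finally show ?thesis .
qed

lemma encs: "x \<in> carrier R \<Longrightarrow> y \<in> set_pmf (Enc x) \<Longrightarrow> length y = m \<and> set y \<subseteq> {..<l}"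
  using agg unfolding is_agg_protocol_def by blast

lemma correct: "length xs = n \<Longrightarrow> set xs \<subseteq> carrier R \<Longrightarrow>
        list_all2 (\<lambda>x y. y \<in> set_pmf (Enc x)) xs ys \<Longrightarrow>
        \<pi> permutes {..<n * m} \<Longrightarrow>
        A (permute_list \<pi> (concat ys)) = finsum R (\<lambda>i. xs ! i) {..<n}"
  using agg unfolding is_agg_protocol_def by blast

lemma len_concat: "set xs \<subseteq> carrier R \<Longrightarrow> list_all2 (\<lambda>x y. y \<in> set_pmf (Enc x)) xs ys \<Longrightarrow>
   length (concat ys) = length xs * m"
  by (rule concat_len) (use encs in auto)

lemma key:
  assumes x: "x \<in> carrier R" and x': "x' \<in> carrier R"
  and ys: "list_all2 (\<lambda>x y. y \<in> set_pmf (Enc x)) (inp x (\<ominus>x)) ys"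
  and y': "y' \<in> set_pmf (Enc x')" and eq: "mset y' = mset (ys ! 0)"
  shows "x' = x"
proof -
  obtain y0 rest where ys0: "ys = y0 # rest" and r: "list_all2 (\<lambda>x y. y \<in> set_pmf (Enc x)) (\<ominus>x # replicate (n-2) \<zero>) rest"
    using ys unfolding inp_def by (auto simp: list_all2_Cons1)
  define ys' where "ys' = y' # rest"
  have ys': "list_all2 (\<lambda>x y. y \<in> set_pmf (Enc x)) (inp x' (\<ominus>x)) ys'"
    using r y' unfolding ys'_def inp_def by auto
  have l1: "length (concat ys) = n * m" using len_concat[OF set_inp ys] x by simp
  have l2: "length (concat ys') = n * m" using len_concat[OF set_inp ys'] x x' by simp
  have "mset (concat ys) = mset (concat ys')" using eq unfolding ys0 ys'_def by simp
  then obtain p where p: "p permutes {..<length (concat ys')}" "permute_list p (concat ys') = concat ys"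
    by (rule mset_eq_permutation)
  have "A (permute_list id (concat ys)) = x \<oplus> \<ominus>x"
    using correct[OF len_inp set_inp ys permutes_id] sum_inp x by simp
  moreover have hp: "p permutes {..<n * m}" using p(1) l2 by simp
  have "A (permute_list p (concat ys')) = x' \<oplus> \<ominus>x"
    using correct[OF len_inp set_inp[OF x' a_inv_closed[OF x]] ys' hp] sum_inp x x' by simp
  ultimately have "x' \<oplus> \<ominus>x = x \<oplus> \<ominus>x" using p by simp
  then show ?thesis using x x' by (metis a_inv_closed add.m_closed r_neg2 a_assoc l_neg r_zero a_comm)
qed


lemma idx:
  assumes x: "x \<in> carrier R" and ys: "list_all2 (\<lambda>x y. y \<in> set_pmf (Enc x)) (inp x (\<ominus>x)) ys"
    and pi: "\<pi> permutes {..<n*m}"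
  shows "mset (ys!0) = image_mset (\<lambda>i. permute_list \<pi> (concat ys) ! i) (mset_set {i. i < n*m \<and> \<pi> i < m})"
    and "card {i. i < n*m \<and> \<pi> i < m} = m"
proof -
  define I where "I = {i. i < n*m \<and> \<pi> i < m}"
  obtain y0 rest where ys0: "ys = y0 # rest" and y0: "y0 \<in> set_pmf (Enc x)"
    using ys unfolding inp_def by (auto simp: list_all2_Cons1)
  have ly0: "length y0 = m" using encs[OF x y0] by simp
  have lc: "length (concat ys) = n * m" using len_concat[OF set_inp ys] x by simp
  have mN: "m \<le> n * m" using n2 by simp
  have img: "\<pi> ` I = {..<m}"
  proof
    show "\<pi> ` I \<subseteq> {..<m}" unfolding I_def by auto
    show "{..<m} \<subseteq> \<pi> ` I"
    proof
      fix j assume j: "j \<in> {..<m}"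
      then have "j < m" by simp
      then have "j < n*m" using mN by (rule less_le_trans)
      then have "j \<in> \<pi> ` {..<n*m}" using permutes_image[OF pi] by simp
      then obtain i where "i < n*m" "\<pi> i = j" by auto
      then show "j \<in> \<pi> ` I" using j unfolding I_def by auto
    qed
  qed
  have inj: "inj_on \<pi> I" using permutes_inj[OF pi] by (auto intro: inj_on_subset)
  have "image_mset (\<lambda>i. permute_list \<pi> (concat ys) ! i) (mset_set I) = image_mset (\<lambda>i. y0 ! (\<pi> i)) (mset_set I)"
  proof (rule image_mset_cong)
    fix i assume "i \<in># mset_set I"
    then have i: "i < n*m" "\<pi> i < m" unfolding I_def
      by (metis (no_types, lifting) elem_mset_set empty_iff finite_nat_set_iff_bounded mem_Collect_eq mset_set.infinite set_mset_empty)+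
    have "permute_list \<pi> (concat ys) ! i = concat ys ! \<pi> i"
      using permute_list_nth[of \<pi> "concat ys" i] pi lc i by simp
    also have "\<dots> = y0 ! \<pi> i" using ys0 ly0 i by (simp add: nth_append)
    finally show "permute_list \<pi> (concat ys) ! i = y0 ! (\<pi> i)" .
  qed
  also have "\<dots> = image_mset (nth y0) (image_mset \<pi> (mset_set I))" by (simp add: multiset.map_comp o_def)
  also have "\<dots> = image_mset (nth y0) (mset_set {..<m})" using image_mset_mset_set[OF inj] img by simp
  also have "\<dots> = mset y0"
  proof -
    have "y0 = map (nth y0) [0..<m]" using ly0 map_nth[of y0] by simp
    then have "mset y0 = image_mset (nth y0) (mset [0..<m])" by (metis mset_map)
    then show ?thesis by (simp add: atLeast0LessThan)
  qed
  finally show "mset (ys!0) = image_mset (\<lambda>i. permute_list \<pi> (concat ys) ! i) (mset_set {i. i < n*m \<and> \<pi> i < m})"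
    using ys0 unfolding I_def by simp
  have "card I = card (\<pi> ` I)" using card_image[OF inj] by simp
  then show "card {i. i < n*m \<and> \<pi> i < m} = m" using img unfolding I_def by simp
qed

definition P :: "nat \<Rightarrow> nat list pmf" where
  "P x = shuffled_view Enc (n*m) (inp x (\<ominus>x))"

lemma count: "card {x \<in> carrier R. S \<in> set_pmf (P x)} \<le> (n*m) choose m"
proof -
  define X where "X = {x \<in> carrier R. S \<in> set_pmf (P x)}"
  define Sub where "Sub = {I. I \<subseteq> {..<n*m} \<and> card I = m}"
  define Q where "Q = (\<lambda>x I. I \<in> Sub \<and> (\<exists>ys. list_all2 (\<lambda>x y. y \<in> set_pmf (Enc x)) (inp x (\<ominus>x)) ys
      \<and> mset (ys!0) = image_mset (\<lambda>i. S ! i) (mset_set I)))"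
  have ex: "\<exists>I. Q x I" if "x \<in> X" for x
  proof -
    from that have x: "x \<in> carrier R" and "S \<in> set_pmf (P x)" unfolding X_def by auto
    then obtain ys \<pi> where ys: "list_all2 (\<lambda>x y. y \<in> set_pmf (Enc x)) (inp x (\<ominus>x)) ys"
      and pi: "\<pi> permutes {..<n*m}" and S: "S = permute_list \<pi> (concat ys)"
      unfolding P_def set_pmf_shuffled by blast
    have "Q x {i. i < n*m \<and> \<pi> i < m}" unfolding Q_def Sub_def mem_Collect_eq
    proof (intro conjI exI)
      show "{i. i < n * m \<and> \<pi> i < m} \<subseteq> {..<n * m}" by auto
      show "card {i. i < n * m \<and> \<pi> i < m} = m" by (rule idx(2)[OF x ys pi])
      show "list_all2 (\<lambda>x y. y \<in> set_pmf (Enc x)) (inp x (\<ominus> x)) ys" by (rule ys)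
      show "mset (ys ! 0) = image_mset ((!) S) (mset_set {i. i < n * m \<and> \<pi> i < m})"
        unfolding S by (rule idx(1)[OF x ys pi])
    qed
    then show ?thesis ..
  qed
  define f where "f = (\<lambda>x. SOME I. Q x I)"
  have fQ: "Q x (f x)" if "x \<in> X" for x using someI_ex[OF ex[OF that]] unfolding f_def .
  have "inj_on f X"
  proof
    fix x x' assume xX: "x \<in> X" and xX': "x' \<in> X" and eq: "f x = f x'"
    have x: "x \<in> carrier R" and x': "x' \<in> carrier R" using xX xX' unfolding X_def by auto
    obtain ys where ys: "list_all2 (\<lambda>x y. y \<in> set_pmf (Enc x)) (inp x (\<ominus>x)) ys"
      and m1: "mset (ys!0) = image_mset (\<lambda>i. S ! i) (mset_set (f x))" using fQ[OF xX] unfolding Q_def by blast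
    obtain ys' where ys': "list_all2 (\<lambda>x y. y \<in> set_pmf (Enc x)) (inp x' (\<ominus>x')) ys'"
      and m2: "mset (ys'!0) = image_mset (\<lambda>i. S ! i) (mset_set (f x'))" using fQ[OF xX'] unfolding Q_def by blast
    have "ys' ! 0 \<in> set_pmf (Enc (inp x' (\<ominus>x') ! 0))"
      using list_all2_nthD[OF ys', of 0] n2 by simp
    moreover have "inp x' (\<ominus>x') ! 0 = x'" unfolding inp_def by (rule nth_Cons_0)
    ultimately have y': "ys' ! 0 \<in> set_pmf (Enc x')" by simp
    have "mset (ys'!0) = mset (ys!0)" using m1 m2 eq by simp
    then have "x' = x" by (rule key[OF x x' ys y'])
    then show "x = x'" by simp
  qed
  moreover have "f ` X \<subseteq> Sub" using fQ unfolding Q_def by auto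
  moreover have "finite Sub" unfolding Sub_def by (rule finite_subset[of _ "Pow {..<n*m}"]) auto
  ultimately have "card X \<le> card Sub" by (meson card_inj_on_le)
  also have "card Sub = (n*m) choose m" unfolding Sub_def using n_subsets[of "{..<n*m}" m] by simp
  finally show ?thesis unfolding X_def .
qed


lemma finite_supp: "x \<in> carrier R \<Longrightarrow> finite (set_pmf (P x))"
proof -
  assume x: "x \<in> carrier R"
  have "set_pmf (P x) \<subseteq> {S. set S \<subseteq> {..<l} \<and> length S = n*m}"
  proof
    fix S assume "S \<in> set_pmf (P x)"
    then obtain ys \<pi> where ys: "list_all2 (\<lambda>x y. y \<in> set_pmf (Enc x)) (inp x (\<ominus>x)) ys"
      and pi: "\<pi> permutes {..<n*m}" and S: "S = permute_list \<pi> (concat ys)"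
      unfolding P_def set_pmf_shuffled by blast
    have "length S = n*m" using len_concat[OF set_inp ys] x S by simp
    moreover have "set S \<subseteq> {..<l}"
    proof
      fix a assume "a \<in> set S"
      have lc: "length (concat ys) = n * m" using len_concat[OF set_inp ys] x by simp
      have "set S = set (concat ys)" using S pi lc by simp
      then obtain y where y: "y \<in> set ys" and a: "a \<in> set y" using \<open>a \<in> set S\<close> by auto
      then obtain i where i: "i < length ys" "y = ys ! i" by (metis in_set_conv_nth)
      have li: "length ys = length (inp x (\<ominus>x))" using ys list_all2_lengthD by metis
      have "y \<in> set_pmf (Enc (inp x (\<ominus>x) ! i))" using list_all2_nthD[OF ys, of i] i li by simp
      moreover have "inp x (\<ominus>x) ! i \<in> carrier R" using set_inp[of x "\<ominus>x"] x i li
        by (metis a_inv_closed nth_mem subsetD)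
      ultimately show "a \<in> {..<l}" using encs a by blast
    qed
    ultimately show "S \<in> {S. set S \<subseteq> {..<l} \<and> length S = n*m}" by simp
  qed
  moreover have "finite {S. set S \<subseteq> {..<l} \<and> length S = n*m}"
    using finite_lists_length_eq[of "{..<l}" "n*m"] by simp
  ultimately show ?thesis by (rule finite_subset)
qed

lemma half: assumes sec: "is_secure R n m Enc \<sigma>" and s1: "\<sigma> \<ge> 1" and x: "x \<in> carrier R"
  shows "measure (measure_pmf (P \<zero>)) (set_pmf (P x)) \<ge> 1/2"
proof -
  have s0: "finsum R (\<lambda>i. inp \<zero> (\<ominus>\<zero>) ! i) {..<n} = finsum R (\<lambda>i. inp x (\<ominus>x) ! i) {..<n}"
    using sum_inp x by (simp add: r_neg)
  have "stat_dist (P \<zero>) (P x) \<le> 2 powr (- \<sigma>)"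
    using sec s0 set_inp[of "\<zero>" "\<ominus>\<zero>"] set_inp[of x "\<ominus>x"] x
    unfolding is_secure_def P_def by simp
  also have "\<dots> \<le> 2 powr (-1)" using s1 by (intro powr_mono) auto
  finally have sd: "stat_dist (P \<zero>) (P x) \<le> 1/2" by (simp add: powr_minus)
  define B where "B = - set_pmf (P x)"
  have z: "measure (measure_pmf (P x)) B = 0"
    using measure_Int_set_pmf[of "P x" B] unfolding B_def by simp
  have "\<bar>measure (measure_pmf (P \<zero>)) B - measure (measure_pmf (P x)) B\<bar> \<le> stat_dist (P \<zero>) (P x)"
    unfolding stat_dist_def
  proof (rule cSUP_upper)
    show "bdd_above (range (\<lambda>A. \<bar>measure_pmf.prob (P \<zero>) A - measure_pmf.prob (P x) A\<bar>))"
    proof (rule bdd_aboveI2)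
      fix A show "\<bar>measure_pmf.prob (P \<zero>) A - measure_pmf.prob (P x) A\<bar> \<le> 1"
        using measure_pmf.prob_le_1[of "P \<zero>" A] measure_pmf.prob_le_1[of "P x" A]
          measure_nonneg[of "measure_pmf (P \<zero>)" A] measure_nonneg[of "measure_pmf (P x)" A] by linarith
    qed
  qed simp
  with z sd have "measure (measure_pmf (P \<zero>)) B \<le> 1/2" by simp
  moreover have "measure (measure_pmf (P \<zero>)) B = 1 - measure (measure_pmf (P \<zero>)) (set_pmf (P x))"
    using measure_pmf.prob_compl[of "set_pmf (P x)" "P \<zero>"] unfolding B_def by (simp add: Compl_eq_Diff_UNIV)
  ultimately show ?thesis by simp
qed

lemma qbound: assumes sec: "is_secure R n m Enc \<sigma>" and s1: "\<sigma> \<ge> 1" and fin: "finite (carrier R)"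
  shows "real (card (carrier R)) / 2 \<le> real ((n*m) choose m)"
proof -
  define p where "p = P \<zero>"
  define F where "F = set_pmf p"
  have fF: "finite F" unfolding F_def p_def by (rule finite_supp) simp
  define C where "C = real ((n*m) choose m)"
  have mx: "measure (measure_pmf p) (set_pmf (P x)) = (\<Sum>S\<in>F. if S \<in> set_pmf (P x) then pmf p S else 0)" for x
  proof -
    have "measure (measure_pmf p) (set_pmf (P x)) = measure (measure_pmf p) (set_pmf (P x) \<inter> F)"
      using measure_Int_set_pmf[of p "set_pmf (P x)"] unfolding F_def by simp
    also have "\<dots> = sum (pmf p) (set_pmf (P x) \<inter> F)"
      using fF by (intro measure_measure_pmf_finite) simp
    also have "\<dots> = (\<Sum>S\<in>F. if S \<in> set_pmf (P x) then pmf p S else 0)"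
      using fF by (simp add: sum.inter_restrict Int_commute)
    finally show ?thesis .
  qed
  have "real (card (carrier R)) / 2 = (\<Sum>x\<in>carrier R. 1/2)" by simp
  also have "\<dots> \<le> (\<Sum>x\<in>carrier R. measure (measure_pmf p) (set_pmf (P x)))"
    unfolding p_def using half[OF sec s1] by (intro sum_mono) auto
  also have "\<dots> = (\<Sum>x\<in>carrier R. \<Sum>S\<in>F. if S \<in> set_pmf (P x) then pmf p S else 0)"
    using mx by simp
  also have "\<dots> = (\<Sum>S\<in>F. \<Sum>x\<in>carrier R. if S \<in> set_pmf (P x) then pmf p S else 0)"
    by (rule sum.swap)
  also have "\<dots> = (\<Sum>S\<in>F. pmf p S * real (card {x \<in> carrier R. S \<in> set_pmf (P x)}))"
  proof (rule sum.cong)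
    fix S assume "S \<in> F"
    have "(\<Sum>x\<in>carrier R. if S \<in> set_pmf (P x) then pmf p S else 0) = sum (\<lambda>x. pmf p S) {x \<in> carrier R. S \<in> set_pmf (P x)}"
      using fin by (rule sum.inter_filter[symmetric])
    then show "(\<Sum>x\<in>carrier R. if S \<in> set_pmf (P x) then pmf p S else 0) = pmf p S * real (card {x \<in> carrier R. S \<in> set_pmf (P x)})"
      by simp
  qed simp
  also have "\<dots> \<le> (\<Sum>S\<in>F. pmf p S * C)"
    unfolding C_def using count by (intro sum_mono mult_left_mono) auto
  also have "\<dots> = (\<Sum>S\<in>F. C * pmf p S)" by (simp add: mult.commute)
  also have "\<dots> = C * (\<Sum>S\<in>F. pmf p S)" by (rule sum_distrib_left[symmetric])
  also have "\<dots> = C" using sum_pmf_eq_1[OF fF] unfolding F_def by simp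
  finally show ?thesis unfolding C_def .
qed

lemma m_pos: "m \<ge> 1"
proof (rule ccontr)
  assume "\<not> m \<ge> 1" then have m0: "m = 0" by simp
  define ys where "ys = map (\<lambda>x. SOME y. y \<in> set_pmf (Enc x)) (inp \<zero> (\<ominus>\<zero>))"
  have ys: "list_all2 (\<lambda>x y. y \<in> set_pmf (Enc x)) (inp \<zero> (\<ominus>\<zero>)) ys"
    unfolding ys_def list_all2_map2 by (rule list_all2_refl) (simp add: set_pmf_not_empty some_in_eq)
  obtain y' where y': "y' \<in> set_pmf (Enc \<one>)" using set_pmf_not_empty by fastforce
  have "length y' = 0" using encs[OF _ y'] m0 by simp
  moreover have "ys ! 0 \<in> set_pmf (Enc \<zero>)" using list_all2_nthD[OF ys, of 0] n2 by (simp add: inp_def)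
  then have "length (ys ! 0) = 0" using encs[of \<zero> "ys!0"] m0 by simp
  ultimately have "mset y' = mset (ys ! 0)" by simp
  then have "\<one> = \<zero>" using key[OF zero_closed one_closed ys y'] by simp
  then show False by simp
qed

end

theorem mainTheorem9:
  shows "\<exists>c::real. c > 0 \<and>
    (\<forall>(R :: nat ring) n q \<sigma> m l Enc A.
       n \<ge> 2 \<longrightarrow> field R \<longrightarrow> finite (carrier R) \<longrightarrow> card (carrier R) = q \<longrightarrow>
       \<sigma> \<ge> 1 \<longrightarrow>
       is_agg_protocol R n m l Enc A \<longrightarrow> is_secure R n m Enc \<sigma> \<longrightarrow>
       real m \<ge> c * ln (real q) / ln (real n))"
proof (intro exI[of _ "1/4"] conjI allI impI)
  fix R :: "nat ring" and n q \<sigma> m l Enc A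
  assume n: "n \<ge> 2" and f: "field R" and fin: "finite (carrier R)" and q: "card (carrier R) = q"
    and s: "\<sigma> \<ge> 1" and agg: "is_agg_protocol R n m l Enc A" and sec: "is_secure R n m Enc \<sigma>"
  interpret proto R n m l Enc A using f n agg by (simp add: proto_def proto_axioms_def)
  have q1: "q \<ge> 1" using q fin zero_closed by (metis card_0_eq empty_iff less_one not_le)
  have "real q \<le> 2 * real ((n*m) choose m)" using qbound[OF sec s fin] q by simp
  then show "1/4 * ln (real q) / ln (real n) \<le> real m" using numeric[OF n m_pos q1] by simp
qed (simp)

end
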